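(* For every basis $\Gamma$, terms $M,N\in\Lambda_R$ and type $\sigma\in\mathbb{T}$: if $\Gamma\vdash M:\sigma$ and $M\to N$, then $\Gamma\vdash N:\sigma$.
   Context: \textbf{Terms.} $\Lambda_R\ni M,N ::= x\mid\lambda x.M\mid MN\mid M.l\mid R\mid M\oplus R$, with records $R ::= \langle l_i=M_i\mid i\in I\rangle$ ($I$ finite, labels pairwise distinct), $x$ ranging over variables and $l$ over labels; $\mathit{lbl}(\langle l_i=M_i\mid i\in I\rangle)=\{l_i\mid i\in I\}$. Reduction $\to$ is the least compatible relation (closed under all term constructors) containing $(\lambda x.M)N\to M[N/x]$ (capture-avoiding substitution); $\langle l_i=M_i\mid i\in I\rangle.l_j\to M_j$ if $j\in I$; $\langle l_i=M_i\mid i\in I\rangle\oplus\langle l_j=N_j\mid j\in J\rangle\to\langle l_i=M_i,\ l_j=N_j\mid i\in I\setminus J,\ j\in J\rangle$. \textbf{Types.} $\mathbb{T}\ni\sigma ::= a\mid\omega\mid\sigma_1\to\sigma_2\mid\sigma_1\cap\sigma_2\mid\rho$, record types $\mathbb{T}_R\ni\rho ::= \langle\rangle\mid\langle l:\sigma\rangle\mid\rho_1+\rho_2\mid\rho_1\cap\rho_2$. Subtyping $\le$ is the least preorder with: $\sigma\le\omega$; $\omega\le\omega\to\omega$; $\sigma\cap\tau\le\sigma$; $\sigma\cap\tau\le\tau$; $\sigma\le\tau_1,\sigma\le\tau_2\Rightarrow\sigma\le\tau_1\cap\tau_2$; $(\sigma\to\tau_1)\cap(\sigma\to\tau_2)\le\sigma\to\tau_1\cap\tau_2$;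 $\sigma_2\le\sigma_1,\tau_1\le\tau_2\Rightarrow\sigma_1\to\tau_1\le\sigma_2\to\tau_2$; $\langle l:\sigma\rangle\le\langle\rangle$; $\langle l:\sigma\rangle\cap\langle l:\tau\rangle\le\langle l:\sigma\cap\tau\rangle$; $\sigma\le\tau\Rightarrow\langle l:\sigma\rangle\le\langle l:\tau\rangle$; $\rho+\langle\rangle=\langle\rangle+\rho=\rho$; $(\rho_1+\rho_2)+\rho_3=\rho_1+(\rho_2+\rho_3)$; $(\rho_1\cap\rho_2)+\rho_3=(\rho_1+\rho_3)\cap(\rho_2+\rho_3)$; $\langle l:\sigma\rangle+(\langle l:\tau\rangle\cap\rho)=\langle l:\tau\rangle\cap\rho$; $\langle l:\sigma\rangle+(\langle l':\tau\rangle\cap\rho)=\langle l':\tau\rangle\cap(\langle l:\sigma\rangle+\rho)$ if $l\neq l'$; $\rho_1\le\rho_2\Rightarrow\rho_1+\rho\le\rho_2+\rho$; $\rho_1=\rho_2\Rightarrow\rho+\rho_1=\rho+\rho_2$; where $\sigma=\tau$ means $\sigma\le\tau$ and $\tau\le\sigma$. $\mathit{lbl}(\langle\rangle)=\emptyset$, $\mathit{lbl}(\langle l:\sigma\rangle)=\{l\}$, $\mathit{lbl}(\rho_1\cap\rho_2)=\mathit{lbl}(\rho_1+\rho_2)=\mathit{lbl}(\rho_1)\cup\mathit{lbl}(\rho_2)$. \textbf{Type assignment.} A basis $\Gamma$ is a finite set $\{x_1:\sigma_1,\ldots,x_n:\sigma_n\}$ with distinct variables. Rules: $\Gamma\vdash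 x:\sigma$ if $x:\sigma\in\Gamma$; from $\Gamma,x:\sigma\vdash M:\tau$ infer $\Gamma\vdash\lambda x.M:\sigma\to\tau$; from $\Gamma\vdash M:\sigma\to\tau$, $\Gamma\vdash N:\sigma$ infer $\Gamma\vdash MN:\tau$; from $\Gamma\vdash M:\sigma$, $\Gamma\vdash M:\tau$ infer $\Gamma\vdash M:\sigma\cap\tau$; $\Gamma\vdash M:\omega$; from $\Gamma\vdash M:\sigma$, $\sigma\le\tau$ infer $\Gamma\vdash M:\tau$; $\Gamma\vdash\langle l_i=M_i\mid i\in I\rangle:\langle\rangle$; from $\Gamma\vdash M_k:\sigma$, $k\in I$ infer $\Gamma\vdash\langle l_i=M_i\mid i\in I\rangle:\langle l_k:\sigma\rangle$; from $\Gamma\vdash M:\langle l:\sigma\rangle$ infer $\Gamma\vdash M.l:\sigma$; from $\Gamma\vdash M:\rho_1$, $\Gamma\vdash R:\rho_2$ and $\mathit{lbl}(R)=\mathit{lbl}(\rho_2)$ infer $\Gamma\vdash M\oplus R:\rho_1+\rho_2$. *)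

theory Defs
  imports Main
begin

text \<open>Labels and type atoms are natural numbers; variables are de Bruijn indices.
  A record is a partial map from labels to terms (well-formed terms require finite domain).\<close>

type_synonym lbl = nat

datatype trm =
    Var nat
  | Lam trm
  | App trm trm
  | Sel trm lbl
  | Rec "lbl \<Rightarrow> trm option"
  | Merge trm "lbl \<Rightarrow> trm option"   (* M \<oplus> R, with R a record *)

inductive wf_trm :: "trm \<Rightarrow> bool" where
  "wf_trm (Var x)"
| "wf_trm M \<Longrightarrow> wf_trm (Lam M)"
| "wf_trm M \<Longrightarrow> wf_trm N \<Longrightarrow> wf_trm (App M N)"
| "wf_trm M \<Longrightarrow> wf_trm (Sel M l)"
| "finite (dom f) \<Longrightarrow> (\<forall>M\<in>ran f. wf_trm M) \<Longrightarrow> wf_trm (Rec f)"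
| "wf_trm M \<Longrightarrow> finite (dom f) \<Longrightarrow> (\<forall>N\<in>ran f. wf_trm N) \<Longrightarrow> wf_trm (Merge M f)"

primrec lift :: "trm \<Rightarrow> nat \<Rightarrow> trm" where
  "lift (Var i) k = (if i < k then Var i else Var (Suc i))"
| "lift (Lam M) k = Lam (lift M (Suc k))"
| "lift (App M N) k = App (lift M k) (lift N k)"
| "lift (Sel M l) k = Sel (lift M k) l"
| "lift (Rec f) k = Rec (\<lambda>l. map_option (\<lambda>M. lift M k) (f l))"
| "lift (Merge M f) k = Merge (lift M k) (\<lambda>l. map_option (\<lambda>N. lift N k) (f l))"

primrec subst :: "trm \<Rightarrow> nat \<Rightarrow> trm \<Rightarrow> trm" where
  "subst (Var i) k N = (if k < i then Var (i - 1) else if i = k then N else Var i)"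
| "subst (Lam M) k N = Lam (subst M (Suc k) (lift N 0))"
| "subst (App M1 M2) k N = App (subst M1 k N) (subst M2 k N)"
| "subst (Sel M l) k N = Sel (subst M k N) l"
| "subst (Rec f) k N = Rec (\<lambda>l. map_option (\<lambda>M. subst M k N) (f l))"
| "subst (Merge M f) k N = Merge (subst M k N) (\<lambda>l. map_option (\<lambda>P. subst P k N) (f l))"

inductive red :: "trm \<Rightarrow> trm \<Rightarrow> bool" (infix \<open>\<rightarrow>\<^sub>R\<close> 50) where
  beta: "App (Lam M) N \<rightarrow>\<^sub>R subst M 0 N"
| sel: "f l = Some M \<Longrightarrow> Sel (Rec f) l \<rightarrow>\<^sub>R M"
| merge: "Merge (Rec f) g \<rightarrow>\<^sub>R Rec (f ++ g)"
| lam: "M \<rightarrow>\<^sub>R M' \<Longrightarrow> Lam M \<rightarrow>\<^sub>R Lam M'"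
| appL: "M \<rightarrow>\<^sub>R M' \<Longrightarrow> App M N \<rightarrow>\<^sub>R App M' N"
| appR: "N \<rightarrow>\<^sub>R N' \<Longrightarrow> App M N \<rightarrow>\<^sub>R App M N'"
| selC: "M \<rightarrow>\<^sub>R M' \<Longrightarrow> Sel M l \<rightarrow>\<^sub>R Sel M' l"
| recC: "f l = Some M \<Longrightarrow> M \<rightarrow>\<^sub>R M' \<Longrightarrow> Rec f \<rightarrow>\<^sub>R Rec (f(l \<mapsto> M'))"
| mergeL: "M \<rightarrow>\<^sub>R M' \<Longrightarrow> Merge M g \<rightarrow>\<^sub>R Merge M' g"
| mergeR: "g l = Some N \<Longrightarrow> N \<rightarrow>\<^sub>R N' \<Longrightarrow> Merge M g \<rightarrow>\<^sub>R Merge M (g(l \<mapsto> N'))"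

datatype ty =
    TAtom nat
  | Omega
  | Arr ty ty
  | Inter ty ty
  | REmpty
  | RField lbl ty
  | RPlus ty ty

text \<open>\<open>wf_ty\<close>: membership in \<open>\<T>\<close>; \<open>rty\<close>: membership in \<open>\<T>\<^sub>R\<close>.\<close>
inductive wf_ty :: "ty \<Rightarrow> bool" and rty :: "ty \<Rightarrow> bool" where
  "wf_ty (TAtom a)"
| "wf_ty Omega"
| "wf_ty s \<Longrightarrow> wf_ty t \<Longrightarrow> wf_ty (Arr s t)"
| "wf_ty s \<Longrightarrow> wf_ty t \<Longrightarrow> wf_ty (Inter s t)"
| "rty r \<Longrightarrow> wf_ty r"
| "rty REmpty"
| "wf_ty s \<Longrightarrow> rty (RField l s)"
| "rty r1 \<Longrightarrow> rty r2 \<Longrightarrow> rty (RPlus r1 r2)"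
| "rty r1 \<Longrightarrow> rty r2 \<Longrightarrow> rty (Inter r1 r2)"

primrec tlbl :: "ty \<Rightarrow> lbl set" where
  "tlbl (TAtom a) = {}"
| "tlbl Omega = {}"
| "tlbl (Arr s t) = {}"
| "tlbl (Inter r1 r2) = tlbl r1 \<union> tlbl r2"
| "tlbl REmpty = {}"
| "tlbl (RField l s) = {l}"
| "tlbl (RPlus r1 r2) = tlbl r1 \<union> tlbl r2"

inductive sub :: "ty \<Rightarrow> ty \<Rightarrow> bool" (infix \<open>\<le>\<^sub>T\<close> 50) where
  refl: "wf_ty s \<Longrightarrow> s \<le>\<^sub>T s"
| trans: "s \<le>\<^sub>T t \<Longrightarrow> t \<le>\<^sub>T u \<Longrightarrow> s \<le>\<^sub>T u"
| top: "wf_ty s \<Longrightarrow> s \<le>\<^sub>T Omega"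
| omega_arr: "Omega \<le>\<^sub>T Arr Omega Omega"
| inter1: "wf_ty s \<Longrightarrow> wf_ty t \<Longrightarrow> Inter s t \<le>\<^sub>T s"
| inter2: "wf_ty s \<Longrightarrow> wf_ty t \<Longrightarrow> Inter s t \<le>\<^sub>T t"
| interI: "s \<le>\<^sub>T t1 \<Longrightarrow> s \<le>\<^sub>T t2 \<Longrightarrow> s \<le>\<^sub>T Inter t1 t2"
| arr_inter: "wf_ty s \<Longrightarrow> wf_ty t1 \<Longrightarrow> wf_ty t2 \<Longrightarrow>
     Inter (Arr s t1) (Arr s t2) \<le>\<^sub>T Arr s (Inter t1 t2)"
| arr: "s2 \<le>\<^sub>T s1 \<Longrightarrow> t1 \<le>\<^sub>T t2 \<Longrightarrow> Arr s1 t1 \<le>\<^sub>T Arr s2 t2"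
| field_empty: "wf_ty s \<Longrightarrow> RField l s \<le>\<^sub>T REmpty"
| field_inter: "wf_ty s \<Longrightarrow> wf_ty t \<Longrightarrow> Inter (RField l s) (RField l t) \<le>\<^sub>T RField l (Inter s t)"
| field: "s \<le>\<^sub>T t \<Longrightarrow> RField l s \<le>\<^sub>T RField l t"
| plus_empty_r1: "rty r \<Longrightarrow> RPlus r REmpty \<le>\<^sub>T r"
| plus_empty_r2: "rty r \<Longrightarrow> r \<le>\<^sub>T RPlus r REmpty"
| plus_empty_l1: "rty r \<Longrightarrow> RPlus REmpty r \<le>\<^sub>T r"
| plus_empty_l2: "rty r \<Longrightarrow> r \<le>\<^sub>T RPlus REmpty r"
| plus_assoc1: "rty r1 \<Longrightarrow> rty r2 \<Longrightarrow> rty r3 \<Longrightarrow>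
     RPlus (RPlus r1 r2) r3 \<le>\<^sub>T RPlus r1 (RPlus r2 r3)"
| plus_assoc2: "rty r1 \<Longrightarrow> rty r2 \<Longrightarrow> rty r3 \<Longrightarrow>
     RPlus r1 (RPlus r2 r3) \<le>\<^sub>T RPlus (RPlus r1 r2) r3"
| plus_distr1: "rty r1 \<Longrightarrow> rty r2 \<Longrightarrow> rty r3 \<Longrightarrow>
     RPlus (Inter r1 r2) r3 \<le>\<^sub>T Inter (RPlus r1 r3) (RPlus r2 r3)"
| plus_distr2: "rty r1 \<Longrightarrow> rty r2 \<Longrightarrow> rty r3 \<Longrightarrow>
     Inter (RPlus r1 r3) (RPlus r2 r3) \<le>\<^sub>T RPlus (Inter r1 r2) r3"
| plus_same1: "wf_ty s \<Longrightarrow> wf_ty t \<Longrightarrow> rty r \<Longrightarrow>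
     RPlus (RField l s) (Inter (RField l t) r) \<le>\<^sub>T Inter (RField l t) r"
| plus_same2: "wf_ty s \<Longrightarrow> wf_ty t \<Longrightarrow> rty r \<Longrightarrow>
     Inter (RField l t) r \<le>\<^sub>T RPlus (RField l s) (Inter (RField l t) r)"
| plus_diff1: "l \<noteq> l' \<Longrightarrow> wf_ty s \<Longrightarrow> wf_ty t \<Longrightarrow> rty r \<Longrightarrow>
     RPlus (RField l s) (Inter (RField l' t) r) \<le>\<^sub>T Inter (RField l' t) (RPlus (RField l s) r)"
| plus_diff2: "l \<noteq> l' \<Longrightarrow> wf_ty s \<Longrightarrow> wf_ty t \<Longrightarrow> rty r \<Longrightarrow>
     Inter (RField l' t) (RPlus (RField l s) r) \<le>\<^sub>T RPlus (RField l s) (Inter (RField l' t) r)"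
| plus_mono_l: "r1 \<le>\<^sub>T r2 \<Longrightarrow> rty r1 \<Longrightarrow> rty r2 \<Longrightarrow> rty r \<Longrightarrow> RPlus r1 r \<le>\<^sub>T RPlus r2 r"
| plus_cong_r: "r1 \<le>\<^sub>T r2 \<Longrightarrow> r2 \<le>\<^sub>T r1 \<Longrightarrow> rty r1 \<Longrightarrow> rty r2 \<Longrightarrow> rty r \<Longrightarrow>
     RPlus r r1 \<le>\<^sub>T RPlus r r2"

text \<open>A basis is a finite partial map from (de Bruijn) variables to types.
  \<open>ext_basis \<Gamma> s\<close> is \<open>\<Gamma>, x:s\<close> for the newly bound variable (index 0).\<close>
definition ext_basis :: "(nat \<Rightarrow> ty option) \<Rightarrow> ty \<Rightarrow> nat \<Rightarrow> ty option" where
  "ext_basis \<Gamma> s = (\<lambda>n. case n of 0 \<Rightarrow> Some s | Suc k \<Rightarrow> \<Gamma> k)"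

definition basis :: "(nat \<Rightarrow> ty option) \<Rightarrow> bool" where
  "basis \<Gamma> \<longleftrightarrow> finite (dom \<Gamma>) \<and> (\<forall>s\<in>ran \<Gamma>. wf_ty s)"

inductive has_type :: "(nat \<Rightarrow> ty option) \<Rightarrow> trm \<Rightarrow> ty \<Rightarrow> bool" (\<open>_ \<turnstile> _ : _\<close> [50,50,50] 50) where
  var: "\<Gamma> x = Some s \<Longrightarrow> \<Gamma> \<turnstile> Var x : s"
| lam: "wf_ty s \<Longrightarrow> ext_basis \<Gamma> s \<turnstile> M : t \<Longrightarrow> \<Gamma> \<turnstile> Lam M : Arr s t"
| app: "\<Gamma> \<turnstile> M : Arr s t \<Longrightarrow> \<Gamma> \<turnstile> N : s \<Longrightarrow> \<Gamma> \<turnstile> App M N : t"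
| inter: "\<Gamma> \<turnstile> M : s \<Longrightarrow> \<Gamma> \<turnstile> M : t \<Longrightarrow> \<Gamma> \<turnstile> M : Inter s t"
| omega: "\<Gamma> \<turnstile> M : Omega"
| subsump: "\<Gamma> \<turnstile> M : s \<Longrightarrow> s \<le>\<^sub>T t \<Longrightarrow> \<Gamma> \<turnstile> M : t"
| rec_empty: "\<Gamma> \<turnstile> Rec f : REmpty"
| rec_field: "f k = Some Mk \<Longrightarrow> \<Gamma> \<turnstile> Mk : s \<Longrightarrow> \<Gamma> \<turnstile> Rec f : RField k s"
| sel: "\<Gamma> \<turnstile> M : RField l s \<Longrightarrow> \<Gamma> \<turnstile> Sel M l : s"
| merge: "\<Gamma> \<turnstile> M : r1 \<Longrightarrow> rty r1 \<Longrightarrow> \<Gamma> \<turnstile> Rec g : r2 \<Longrightarrow> rty r2 \<Longrightarrow> dom g = tlbl r2 \<Longrightarrow>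
     \<Gamma> \<turnstile> Merge M g : RPlus r1 r2"

end

theory Submission
  imports Defs
begin

inductive_cases rtyE_Inter: "rty (Inter a b)"
inductive_cases rtyE_Field: "rty (RField l s)"
inductive_cases rtyE_Plus: "rty (RPlus a b)"
inductive_cases rtyE_Omega: "rty Omega"
inductive_cases rtyE_Arr: "rty (Arr a b)"
inductive_cases rtyE_Atom: "rty (TAtom a)"
inductive_cases wfE_Inter: "wf_ty (Inter a b)"
inductive_cases wfE_Field: "wf_ty (RField l s)"
inductive_cases wfE_Plus: "wf_ty (RPlus a b)"

lemma dom_mo[simp]: "dom (\<lambda>l. map_option h (g l)) = dom g"
  by (auto simp: dom_def)

lemma sub_wf: "s \<le>\<^sub>T t \<Longrightarrow> wf_ty s \<and> wf_ty t"
  by (induction rule: sub.induct) (auto intro: wf_ty_rty.intros)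

lemma sub_tlbl: "s \<le>\<^sub>T t \<Longrightarrow> tlbl t \<subseteq> tlbl s"
  by (induction rule: sub.induct) auto

lemma narrow:
  "\<Gamma> \<turnstile> M : t \<Longrightarrow> (\<forall>x s. \<Gamma> x = Some s \<longrightarrow> (\<exists>s'. \<Gamma>' x = Some s' \<and> (s' = s \<or> s' \<le>\<^sub>T s))) \<Longrightarrow> \<Gamma>' \<turnstile> M : t"
proof (induction arbitrary: \<Gamma>' rule: has_type.induct)
  case (var \<Gamma> x s)
  then obtain s' where "\<Gamma>' x = Some s'" "s' = s \<or> s' \<le>\<^sub>T s" by blast
  then show ?case by (meson has_type.var has_type.subsump)
next
  case (lam s \<Gamma> M t)
  have "\<forall>x s'. ext_basis \<Gamma> s x = Some s' \<longrightarrow> (\<exists>s''. ext_basis \<Gamma>' s x = Some s'' \<and> (s'' = s' \<or> s'' \<le>\<^sub>T s'))"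
    using lam.prems by (auto simp: ext_basis_def split: nat.splits)
  then show ?case using lam by (auto intro: has_type.lam)
next
  case (app \<Gamma> M s t N) then show ?case by (meson has_type.app)
next
  case (inter \<Gamma> M s t) then show ?case by (meson has_type.inter)
next
  case (omega \<Gamma> M) show ?case by (rule has_type.omega)
next
  case (subsump \<Gamma> M s t) then show ?case by (meson has_type.subsump)
next
  case (rec_empty \<Gamma> f) show ?case by (rule has_type.rec_empty)
next
  case (rec_field f k Mk \<Gamma> s) then show ?case by (meson has_type.rec_field)
next
  case (sel \<Gamma> M l s) then show ?case by (meson has_type.sel)
next
  case (merge \<Gamma> M r1 g r2) then show ?case by (meson has_type.merge)
qed

lemma weaken:
  "\<Gamma> \<turnstile> M : t \<Longrightarrow> (\<forall>i. \<Gamma>' (if i < k then i else Suc i) = \<Gamma> i) \<Longrightarrow> \<Gamma>' \<turnstile> lift M k : t"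
proof (induction arbitrary: \<Gamma>' k rule: has_type.induct)
  case (var \<Gamma> x s) then show ?case by (metis has_type.var lift.simps(1))
next
  case (lam s \<Gamma> M t)
  have "\<forall>i. ext_basis \<Gamma>' s (if i < Suc k then i else Suc i) = ext_basis \<Gamma> s i"
  proof
    fix i show "ext_basis \<Gamma>' s (if i < Suc k then i else Suc i) = ext_basis \<Gamma> s i"
      using lam.prems[rule_format, of "i - 1"] by (cases i) (auto simp: ext_basis_def)
  qed
  then show ?case using lam by (auto intro: has_type.lam)
next
  case (rec_field f k' Mk \<Gamma> s)
  then show ?case by (auto intro: has_type.rec_field)
next
  case (merge \<Gamma> M r1 g r2)
  show ?case unfolding lift.simps subst.simps
    by (rule has_type.merge[OF merge.IH(1)[OF merge.prems] merge.hyps(2) merge.IH(2)[OF merge.prems, simplified] merge.hyps(4)]) (simp add: merge.hyps(5))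
next
  case (app \<Gamma> M s t N) then show ?case by (simp only: lift.simps subst.simps) (meson has_type.app)
next
  case (subsump \<Gamma> M s t) then show ?case by (meson has_type.subsump)
next
  case (inter \<Gamma> M s t) then show ?case by (meson has_type.inter)
qed (auto intro: has_type.intros)

lemma subst_lemma:
  "\<Gamma> \<turnstile> M : t \<Longrightarrow> \<Gamma> k = Some u \<Longrightarrow> (\<forall>i. \<Delta> i = \<Gamma> (if i < k then i else Suc i)) \<Longrightarrow> \<Delta> \<turnstile> N : u \<Longrightarrow> \<Delta> \<turnstile> subst M k N : t"
proof (induction arbitrary: \<Delta> k N u rule: has_type.induct)
  case (var \<Gamma> x s)
  show ?case
  proof (cases "k < x")
    case True
    then have "\<Delta> (x - 1) = \<Gamma> x" using var.prems(2)[rule_format, of "x - 1"] by auto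
    then show ?thesis using True var by (auto intro: has_type.var)
  next
    case False
    then show ?thesis using var var.prems(2)[rule_format, of x] by (auto intro: has_type.var)
  qed
next
  case (lam s \<Gamma> M t)
  have 1: "ext_basis \<Gamma> s (Suc k) = Some u" using lam.prems by (simp add: ext_basis_def)
  have 2: "\<forall>i. ext_basis \<Delta> s i = ext_basis \<Gamma> s (if i < Suc k then i else Suc i)"
  proof
    fix i show "ext_basis \<Delta> s i = ext_basis \<Gamma> s (if i < Suc k then i else Suc i)"
      using lam.prems(2)[rule_format, of "i - 1"] by (cases i) (auto simp: ext_basis_def)
  qed
  have 3: "ext_basis \<Delta> s \<turnstile> lift N 0 : u"
    using weaken[OF lam.prems(3)] by (simp add: ext_basis_def)
  show ?case using lam.IH[OF 1 2 3] lam.hyps by (auto intro: has_type.lam)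
next
  case (rec_field f k' Mk \<Gamma> s)
  then show ?case by (auto intro: has_type.rec_field)
next
  case (merge \<Gamma> M r1 g r2)
  show ?case unfolding lift.simps subst.simps
    by (rule has_type.merge[OF merge.IH(1)[OF merge.prems] merge.hyps(2) merge.IH(2)[OF merge.prems, simplified] merge.hyps(4)]) (simp add: merge.hyps(5))
next
  case (app \<Gamma> M s t N) then show ?case by (simp only: lift.simps subst.simps) (meson has_type.app)
next
  case (subsump \<Gamma> M s t) then show ?case by (meson has_type.subsump)
next
  case (inter \<Gamma> M s t) then show ?case by (meson has_type.inter)
qed (auto intro: has_type.intros)

fun lprop :: "(nat \<Rightarrow> ty option) \<Rightarrow> trm \<Rightarrow> ty \<Rightarrow> bool" where
  "lprop \<Gamma> M (Arr s t) = (ext_basis \<Gamma> s \<turnstile> M : t)"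
| "lprop \<Gamma> M (Inter a b) = (lprop \<Gamma> M a \<and> lprop \<Gamma> M b)"
| "lprop \<Gamma> M Omega = True"
| "lprop \<Gamma> M (TAtom a) = False"
| "lprop \<Gamma> M REmpty = False"
| "lprop \<Gamma> M (RField l s) = False"
| "lprop \<Gamma> M (RPlus a b) = False"

lemma rty_not_lprop: "rty r \<Longrightarrow> \<not> lprop \<Gamma> M r"
  by (induction r) (auto elim: rtyE_Inter rtyE_Omega rtyE_Arr)

lemma lprop_sub: "s \<le>\<^sub>T t \<Longrightarrow> lprop \<Gamma> M s \<Longrightarrow> lprop \<Gamma> M t"
proof (induction rule: sub.induct)
  case (arr s2 s1 t1 t2)
  have "ext_basis \<Gamma> s2 \<turnstile> M : t1"
    by (rule narrow[of "ext_basis \<Gamma> s1"]) (use arr in \<open>auto simp: ext_basis_def split: nat.splits\<close>)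
  then show ?case using arr by (auto intro: has_type.subsump)
qed (auto intro: has_type.intros simp: rty_not_lprop)

lemma lam_inv: "\<Gamma> \<turnstile> L : \<tau> \<Longrightarrow> L = Lam M \<Longrightarrow> lprop \<Gamma> M \<tau>"
  by (induction rule: has_type.induct) (auto intro: lprop_sub)

primrec rp :: "(nat \<Rightarrow> ty option) \<Rightarrow> lbl set \<Rightarrow> (lbl \<Rightarrow> trm option) \<Rightarrow> ty \<Rightarrow> bool" where
  "rp \<Gamma> L h (TAtom a) = True"
| "rp \<Gamma> L h Omega = True"
| "rp \<Gamma> L h (Arr s t) = True"
| "rp \<Gamma> L h (Inter a b) = (rp \<Gamma> L h a \<and> rp \<Gamma> L h b)"
| "rp \<Gamma> L h REmpty = True"
| "rp \<Gamma> L h (RField l s) = (l \<in> L \<or> (\<exists>M. h l = Some M \<and> \<Gamma> \<turnstile> M : s))"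
| "rp \<Gamma> L h (RPlus a b) = (rp \<Gamma> L h b \<and> rp \<Gamma> (L \<union> tlbl b) h a)"

lemma rp_mono: "rp \<Gamma> L h t \<Longrightarrow> L \<subseteq> L' \<Longrightarrow> rp \<Gamma> L' h t"
proof (induction t arbitrary: L L')
  case (RPlus a b) then show ?case by simp (meson Un_mono order_refl)
qed auto

lemma rp_sub: "s \<le>\<^sub>T t \<Longrightarrow> rp \<Gamma> L h s \<Longrightarrow> rp \<Gamma> L h t"
proof (induction arbitrary: L rule: sub.induct)
  case (field_inter s t l)
  then show ?case by (auto intro: has_type.inter)
next
  case (field s t l)
  then show ?case by (auto intro: has_type.subsump)
next
  case (plus_assoc1 r1 r2 r3)
  then show ?case by (auto elim!: rp_mono)
next
  case (plus_assoc2 r1 r2 r3)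
  then show ?case by (auto elim!: rp_mono)
next
  case (plus_diff1 l l' s t r)
  then show ?case by auto
next
  case (plus_diff2 l l' s t r)
  then show ?case by (auto elim: rp_mono)
next
  case (plus_cong_r r1 r2 r)
  then have "tlbl r1 = tlbl r2" using sub_tlbl by blast
  then show ?case using plus_cong_r by simp
qed auto

lemma rec_inv: "\<Gamma> \<turnstile> T : \<tau> \<Longrightarrow> T = Rec h \<Longrightarrow> rp \<Gamma> {} h \<tau>"
  by (induction rule: has_type.induct) (auto intro: rp_sub)

fun nfl :: "ty \<Rightarrow> (lbl \<times> ty) list" where
  "nfl REmpty = []"
| "nfl (RField l s) = [(l, s)]"
| "nfl (Inter a b) = nfl a @ nfl b"
| "nfl (RPlus a b) = filter (\<lambda>p. fst p \<notin> tlbl b) (nfl a) @ nfl b"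
| "nfl (TAtom a) = []"
| "nfl Omega = []"
| "nfl (Arr a b) = []"

fun nf :: "(lbl \<times> ty) list \<Rightarrow> ty" where
  "nf [] = REmpty"
| "nf ((l, s) # xs) = Inter (RField l s) (nf xs)"

definition W :: "(lbl \<times> ty) list \<Rightarrow> bool" where
  "W xs \<longleftrightarrow> (\<forall>p\<in>set xs. wf_ty (snd p))"

definition eqv :: "ty \<Rightarrow> ty \<Rightarrow> bool" where
  "eqv a b \<longleftrightarrow> a \<le>\<^sub>T b \<and> b \<le>\<^sub>T a"

lemma eqv_trans: "eqv a b \<Longrightarrow> eqv b c \<Longrightarrow> eqv a c"
  unfolding eqv_def by (meson sub.trans)

lemma eqv_sym: "eqv a b \<Longrightarrow> eqv b a"
  unfolding eqv_def by simp

lemma eqv_refl: "wf_ty a \<Longrightarrow> eqv a a"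
  unfolding eqv_def by (simp add: sub.refl)

lemma wf_Inter: "wf_ty (Inter a b) \<Longrightarrow> wf_ty a \<and> wf_ty b"
  by (auto elim: wfE_Inter rtyE_Inter intro: wf_ty_rty.intros)

lemma inter_mono: "a \<le>\<^sub>T a' \<Longrightarrow> b \<le>\<^sub>T b' \<Longrightarrow> Inter a b \<le>\<^sub>T Inter a' b'"
  by (meson sub.interI sub.inter1 sub.inter2 sub.trans sub_wf)

lemma eqv_inter: "eqv a a' \<Longrightarrow> eqv b b' \<Longrightarrow> eqv (Inter a b) (Inter a' b')"
  unfolding eqv_def by (simp add: inter_mono)

lemma W_Cons[simp]: "W ((l, s) # xs) \<longleftrightarrow> wf_ty s \<and> W xs"
  by (auto simp: W_def)

lemma W_app[simp]: "W (xs @ ys) \<longleftrightarrow> W xs \<and> W ys"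
  by (auto simp: W_def)

lemma W_Nil[simp]: "W []"
  by (simp add: W_def)

lemma nf_rty: "W xs \<Longrightarrow> rty (nf xs)"
  by (induction xs rule: nf.induct) (auto intro: wf_ty_rty.intros)

lemma nf_wf: "W xs \<Longrightarrow> wf_ty (nf xs)"
  by (simp add: nf_rty wf_ty_rty.intros)

lemma nfl_wf: "rty r \<Longrightarrow> W (nfl r)"
proof (induction r)
  case (RField l s) then show ?case by (auto elim: rtyE_Field)
next
  case (Inter a b) then show ?case by (auto elim: rtyE_Inter)
next
  case (RPlus a b) then show ?case by (auto elim!: rtyE_Plus simp: W_def)
qed auto

lemma tlbl_nfl: "tlbl r = fst ` set (nfl r)"
  by (induction r) auto

lemma nf_le_REmpty: "W xs \<Longrightarrow> nf xs \<le>\<^sub>T REmpty"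
proof (induction xs rule: nf.induct)
  case 1 then show ?case by (simp add: sub.refl wf_ty_rty.intros)
next
  case (2 l s xs)
  then have w: "wf_ty s" "wf_ty (nf xs)" by (auto intro: nf_wf)
  have "Inter (RField l s) (nf xs) \<le>\<^sub>T RField l s" using w by (intro sub.inter1) (auto intro: wf_ty_rty.intros)
  then show ?case using w by (auto intro: sub.trans sub.field_empty)
qed

lemma nf_mem: "W xs \<Longrightarrow> p \<in> set xs \<Longrightarrow> nf xs \<le>\<^sub>T RField (fst p) (snd p)"
proof (induction xs rule: nf.induct)
  case 1 then show ?case by simp
next
  case (2 l s xs)
  have w: "wf_ty (RField l s)" "wf_ty (nf xs)" using 2 by (auto intro: wf_ty_rty.intros nf_wf)
  show ?case
  proof (cases "p = (l, s)")
    case True then show ?thesis using w by (auto intro: sub.inter1)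
  next
    case False then show ?thesis using 2 w by (auto intro: sub.trans[OF sub.inter2])
  qed
qed

lemma le_nf: "T \<le>\<^sub>T REmpty \<Longrightarrow> (\<forall>p\<in>set ys. T \<le>\<^sub>T RField (fst p) (snd p)) \<Longrightarrow> T \<le>\<^sub>T nf ys"
  by (induction ys rule: nf.induct) (auto intro: sub.interI)

lemma nf_subset: "W xs \<Longrightarrow> set ys \<subseteq> set xs \<Longrightarrow> nf xs \<le>\<^sub>T nf ys"
  by (rule le_nf) (auto intro: nf_le_REmpty nf_mem)

lemma W_subset: "W xs \<Longrightarrow> set ys \<subseteq> set xs \<Longrightarrow> W ys"
  by (auto simp: W_def)

lemma nf_seteq: "W xs \<Longrightarrow> set xs = set ys \<Longrightarrow> eqv (nf xs) (nf ys)"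
  unfolding eqv_def by (metis W_subset nf_subset order_refl)

lemma nf_app: "W xs \<Longrightarrow> W ys \<Longrightarrow> eqv (Inter (nf xs) (nf ys)) (nf (xs @ ys))"
proof -
  assume w: "W xs" "W ys"
  have wi: "wf_ty (nf xs)" "wf_ty (nf ys)" using w nf_wf by auto
  have "Inter (nf xs) (nf ys) \<le>\<^sub>T nf (xs @ ys)"
  proof (rule le_nf)
    show "Inter (nf xs) (nf ys) \<le>\<^sub>T REmpty"
      using wi w by (meson nf_le_REmpty sub.inter1 sub.trans)
    show "\<forall>p\<in>set (xs @ ys). Inter (nf xs) (nf ys) \<le>\<^sub>T RField (fst p) (snd p)"
      using wi w by (auto intro: sub.trans[OF sub.inter1] sub.trans[OF sub.inter2] nf_mem)
  qed
  moreover have "nf (xs @ ys) \<le>\<^sub>T Inter (nf xs) (nf ys)"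
    using w by (auto intro!: sub.interI nf_subset)
  ultimately show ?thesis unfolding eqv_def by simp
qed

lemma Cf: "W ys \<Longrightarrow> wf_ty s \<Longrightarrow>
  eqv (RPlus (RField l s) (nf ys)) (nf (if l \<in> fst ` set ys then ys else (l, s) # ys))"
proof (induction ys rule: nf.induct)
  case 1
  have f: "rty (RField l s)" "wf_ty (RField l s)" using 1 by (auto intro: wf_ty_rty.intros)
  have "eqv (RPlus (RField l s) REmpty) (RField l s)"
    unfolding eqv_def using f by (auto intro: sub.plus_empty_r1 sub.plus_empty_r2)
  moreover have "eqv (RField l s) (Inter (RField l s) REmpty)"
    unfolding eqv_def using f 1 by (auto intro!: sub.interI sub.refl sub.field_empty sub.inter1 wf_ty_rty.intros)
  ultimately show ?case by (auto intro: eqv_trans)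
next
  case (2 l' t ys)
  have r: "rty (nf ys)" "wf_ty t" "W ys" using 2 nf_rty by auto
  show ?case
  proof (cases "l = l'")
    case True
    then have "eqv (RPlus (RField l s) (Inter (RField l' t) (nf ys))) (Inter (RField l' t) (nf ys))"
      unfolding eqv_def using r 2 by (auto intro: sub.plus_same1 sub.plus_same2)
    then show ?thesis using True by simp
  next
    case False
    have a: "eqv (RPlus (RField l s) (Inter (RField l' t) (nf ys))) (Inter (RField l' t) (RPlus (RField l s) (nf ys)))"
      unfolding eqv_def using r 2 False by (auto intro: sub.plus_diff1 sub.plus_diff2)
    define Y where "Y = (if l \<in> fst ` set ys then ys else (l, s) # ys)"
    have b: "eqv (Inter (RField l' t) (RPlus (RField l s) (nf ys))) (Inter (RField l' t) (nf Y))"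
      unfolding Y_def using 2 r by (intro eqv_inter eqv_refl) (auto intro: wf_ty_rty.intros)
    have WY: "W ((l', t) # Y)" using r 2 by (auto simp: Y_def)
    have c: "eqv (nf ((l', t) # Y)) (nf (if l \<in> fst ` set ((l', t) # ys) then (l', t) # ys else (l, s) # (l', t) # ys))"
      by (rule nf_seteq[OF WY]) (use False in \<open>auto simp: Y_def\<close>)
    show ?thesis using eqv_trans[OF a eqv_trans[OF b]] c by simp
  qed
qed

lemma K: "W xs \<Longrightarrow> W ys \<Longrightarrow>
  eqv (RPlus (nf xs) (nf ys)) (nf (filter (\<lambda>p. fst p \<notin> fst ` set ys) xs @ ys))"
proof (induction xs rule: nf.induct)
  case 1
  then show ?case unfolding eqv_def using nf_rty
    by (auto intro: sub.plus_empty_l1 sub.plus_empty_l2)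
next
  case (2 l s xs)
  have r: "rty (RField l s)" "rty (nf xs)" "rty (nf ys)" "wf_ty s" "W xs" using 2 nf_rty
    by (auto intro: wf_ty_rty.intros)
  define A where "A = (if l \<in> fst ` set ys then ys else (l, s) # ys)"
  have a: "eqv (RPlus (Inter (RField l s) (nf xs)) (nf ys))
     (Inter (RPlus (RField l s) (nf ys)) (RPlus (nf xs) (nf ys)))"
    unfolding eqv_def using r by (auto intro: sub.plus_distr1 sub.plus_distr2)
  have b: "eqv (Inter (RPlus (RField l s) (nf ys)) (RPlus (nf xs) (nf ys)))
     (Inter (nf A) (nf (filter (\<lambda>p. fst p \<notin> fst ` set ys) xs @ ys)))"
    unfolding A_def using 2 r by (intro eqv_inter Cf) auto
  have WA: "W A" using 2 r by (auto simp: A_def)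
  have c: "eqv (Inter (nf A) (nf (filter (\<lambda>p. fst p \<notin> fst ` set ys) xs @ ys)))
      (nf (A @ filter (\<lambda>p. fst p \<notin> fst ` set ys) xs @ ys))"
    using WA 2 r by (intro nf_app) (auto simp: W_def)
  have d: "eqv (nf (A @ filter (\<lambda>p. fst p \<notin> fst ` set ys) xs @ ys))
      (nf (filter (\<lambda>p. fst p \<notin> fst ` set ys) ((l, s) # xs) @ ys))"
  proof -
    have "W (A @ filter (\<lambda>p. fst p \<notin> fst ` set ys) xs @ ys)"
      using WA r(5) 2(3) by (auto simp: W_def)
    then show ?thesis by (rule nf_seteq) (auto simp: A_def)
  qed
  show ?case using eqv_trans[OF a eqv_trans[OF b eqv_trans[OF c d]]] by simp
qed

lemma nf_main: "rty r \<Longrightarrow> eqv r (nf (nfl r))"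
proof (induction r)
  case REmpty then show ?case by (simp add: eqv_refl wf_ty_rty.intros)
next
  case (RField l s)
  then have s: "wf_ty s" by (auto elim: rtyE_Field)
  have f: "wf_ty (RField l s)" using s by (auto intro: wf_ty_rty.intros)
  show ?case unfolding eqv_def using f s
    by (auto intro!: sub.interI sub.refl sub.field_empty sub.inter1 wf_ty_rty.intros)
next
  case (Inter a b)
  then have ab: "rty a" "rty b" by (auto elim: rtyE_Inter)
  show ?case using eqv_trans[OF eqv_inter[OF Inter.IH(1)[OF ab(1)] Inter.IH(2)[OF ab(2)]] nf_app[OF nfl_wf[OF ab(1)] nfl_wf[OF ab(2)]]]
    by simp
next
  case (RPlus a b)
  then have ab: "rty a" "rty b" by (auto elim: rtyE_Plus)
  have ea: "eqv a (nf (nfl a))" and eb: "eqv b (nf (nfl b))" using RPlus ab by auto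
  have ra: "rty (nf (nfl a))" and rb: "rty (nf (nfl b))" using ab nfl_wf nf_rty by auto
  have 1: "eqv (RPlus a b) (RPlus (nf (nfl a)) b)"
    using ea ab ra unfolding eqv_def by (auto intro: sub.plus_mono_l)
  have 2: "eqv (RPlus (nf (nfl a)) b) (RPlus (nf (nfl a)) (nf (nfl b)))"
    using eb ab ra rb unfolding eqv_def by (auto intro: sub.plus_cong_r)
  have 3: "eqv (RPlus (nf (nfl a)) (nf (nfl b))) (nf (nfl (RPlus a b)))"
    using K[OF nfl_wf[OF ab(1)] nfl_wf[OF ab(2)]] by (simp add: tlbl_nfl)
  show ?case using eqv_trans[OF 1 eqv_trans[OF 2 3]] .
qed (auto elim: rtyE_Omega rtyE_Arr rtyE_Atom)

lemma rebuild: "(\<forall>p\<in>set xs. \<exists>M. h (fst p) = Some M \<and> \<Gamma> \<turnstile> M : snd p) \<Longrightarrow> \<Gamma> \<turnstile> Rec h : nf xs"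
  by (induction xs rule: nf.induct) (auto intro: has_type.intros)

lemma rp_nfl: "rp \<Gamma> L h r \<Longrightarrow> p \<in> set (nfl r) \<Longrightarrow> fst p \<notin> L \<Longrightarrow> \<exists>M. h (fst p) = Some M \<and> \<Gamma> \<turnstile> M : snd p"
proof (induction r arbitrary: L)
  case (RPlus a b) then show ?case by auto
qed auto

lemma merge_rebuild:
  assumes "\<Gamma> \<turnstile> Rec f : r1" "rty r1" "\<Gamma> \<turnstile> Rec g : r2" "rty r2" "dom g = tlbl r2"
  shows "\<Gamma> \<turnstile> Rec (f ++ g) : RPlus r1 r2"
proof -
  have p1: "rp \<Gamma> {} f r1" and p2: "rp \<Gamma> {} g r2" using assms rec_inv by auto
  have "\<forall>p\<in>set (nfl (RPlus r1 r2)). \<exists>M. (f ++ g) (fst p) = Some M \<and> \<Gamma> \<turnstile> M : snd p"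
  proof
    fix p assume "p \<in> set (nfl (RPlus r1 r2))"
    then consider "p \<in> set (nfl r1)" "fst p \<notin> tlbl r2" | "p \<in> set (nfl r2)" by auto
    then show "\<exists>M. (f ++ g) (fst p) = Some M \<and> \<Gamma> \<turnstile> M : snd p"
    proof cases
      case 1
      then have "(f ++ g) (fst p) = f (fst p)" using assms(5) by (simp add: map_add_dom_app_simps(3))
      then show ?thesis using rp_nfl[OF p1 1(1)] by simp
    next
      case 2
      then have "fst p \<in> dom g" using assms(5) tlbl_nfl by auto
      then have "(f ++ g) (fst p) = g (fst p)" by (simp add: map_add_dom_app_simps(1))
      then show ?thesis using rp_nfl[OF p2 2] by simp
    qed
  qed
  then have "\<Gamma> \<turnstile> Rec (f ++ g) : nf (nfl (RPlus r1 r2))" by (rule rebuild)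
  moreover have "rty (RPlus r1 r2)" using assms by (auto intro: wf_ty_rty.intros)
  ultimately show ?thesis using nf_main unfolding eqv_def by (meson has_type.subsump)
qed

inductive_cases redE_Var: "Var x \<rightarrow>\<^sub>R N"
inductive_cases redE_Lam: "Lam M \<rightarrow>\<^sub>R N"
inductive_cases redE_App: "App M P \<rightarrow>\<^sub>R N"
inductive_cases redE_Sel: "Sel M l \<rightarrow>\<^sub>R N"
inductive_cases redE_Rec: "Rec f \<rightarrow>\<^sub>R N"
inductive_cases redE_Merge: "Merge M g \<rightarrow>\<^sub>R N"

lemma sr: "\<Gamma> \<turnstile> M : \<sigma> \<Longrightarrow> M \<rightarrow>\<^sub>R N \<Longrightarrow> \<Gamma> \<turnstile> N : \<sigma>"
proof (induction arbitrary: N rule: has_type.induct)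
  case (var \<Gamma> x s) then show ?case by (auto elim: redE_Var)
next
  case (lam s \<Gamma> M t)
  from lam.prems show ?case
    by (rule redE_Lam) (use lam in \<open>auto intro: has_type.lam\<close>)
next
  case (app \<Gamma> M s t P)
  show ?case
  proof (rule redE_App[OF app.prems])
    fix Q assume 1: "M = Lam Q" "N = subst Q 0 P"
    have "lprop \<Gamma> Q (Arr s t)" using lam_inv app.hyps(1) 1 by blast
    then have q: "ext_basis \<Gamma> s \<turnstile> Q : t" by simp
    have "\<Gamma> \<turnstile> subst Q 0 P : t"
      by (rule subst_lemma[OF q, of 0 s \<Gamma> P]) (use app.hyps(2) in \<open>auto simp: ext_basis_def\<close>)
    then show ?thesis using 1 by simp
  next
    fix M' assume "N = App M' P" "M \<rightarrow>\<^sub>R M'" then show ?thesis using app by (auto intro: has_type.app)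
  next
    fix P' assume "N = App M P'" "P \<rightarrow>\<^sub>R P'" then show ?thesis using app by (auto intro: has_type.app)
  qed
next
  case (inter \<Gamma> M s t) then show ?case by (auto intro: has_type.inter)
next
  case (omega \<Gamma> M) then show ?case by (auto intro: has_type.omega)
next
  case (subsump \<Gamma> M s t) then show ?case by (auto intro: has_type.subsump)
next
  case (rec_empty \<Gamma> f) then show ?case by (auto elim: redE_Rec intro: has_type.rec_empty)
next
  case (rec_field f k Mk \<Gamma> s)
  from rec_field.prems obtain l M0 M' where e: "N = Rec (f(l \<mapsto> M'))" "f l = Some M0" "M0 \<rightarrow>\<^sub>R M'"
    by (auto elim: redE_Rec)
  show ?case
  proof (cases "l = k")
    case True
    then have "\<Gamma> \<turnstile> M' : s" using rec_field e by auto
    then show ?thesis using e True by (auto intro: has_type.rec_field)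
  next
    case False
    then show ?thesis using e rec_field by (auto intro: has_type.rec_field)
  qed
next
  case (sel \<Gamma> M l s)
  show ?case
  proof (rule redE_Sel[OF sel.prems])
    fix f assume 1: "M = Rec f" "f l = Some N"
    have "rp \<Gamma> {} f (RField l s)" using rec_inv sel.hyps 1 by blast
    then show ?thesis using 1 by auto
  next
    fix M' assume "N = Sel M' l" "M \<rightarrow>\<^sub>R M'" then show ?thesis using sel.IH by (auto intro: has_type.sel)
  qed
next
  case (merge \<Gamma> M r1 g r2)
  show ?case
  proof (rule redE_Merge[OF merge.prems])
    fix f assume 1: "M = Rec f" "N = Rec (f ++ g)"
    then show ?thesis using merge_rebuild merge.hyps by auto
  next
    fix M' assume "N = Merge M' g" "M \<rightarrow>\<^sub>R M'" then show ?thesis using merge by (auto intro: has_type.merge)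
  next
    fix l P P' assume 3: "N = Merge M (g(l \<mapsto> P'))" "g l = Some P" "P \<rightarrow>\<^sub>R P'"
    have "Rec g \<rightarrow>\<^sub>R Rec (g(l \<mapsto> P'))" using 3 by (auto intro: red.recC)
    then have t: "\<Gamma> \<turnstile> Rec (g(l \<mapsto> P')) : r2" using merge.IH(2) by blast
    have d: "dom (g(l \<mapsto> P')) = tlbl r2" using 3 merge.hyps(5) by auto
    show ?thesis unfolding 3(1) by (rule has_type.merge[OF merge.hyps(1) merge.hyps(2) t merge.hyps(4) d])
  qed
qed

theorem theorem3p16:
  fixes \<Gamma> :: "nat \<Rightarrow> ty option" and M N :: trm and \<sigma> :: ty
  assumes "basis \<Gamma>" and "wf_trm M" and "wf_trm N" and "wf_ty \<sigma>"
    and "\<Gamma> \<turnstile> M : \<sigma>" and "M \<rightarrow>\<^sub>R N"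
  shows "\<Gamma> \<turnstile> N : \<sigma>"
  using assms(5,6) by (rule sr)

end
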